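(* Every matching of $X_{2k}$ of size $k\ge 4$ contains two separated pairs that have no edge in common.
   Context: Let $k\ge 1$ and let $X_{2k}=\{P_1,\dots,P_{2k}\}$ be $2k$ points in convex position in the plane, labeled in clockwise cyclic order; indices are taken modulo $2k$. A matching of $X_{2k}$ means a set of $k$ pairwise non-crossing straight segments (edges) with endpoints in $X_{2k}$ covering every point exactly once; its size is $k$. A block of a matching $M$ is a pair of edges $\{P_iP_{i+3},P_{i+1}P_{i+2}\}\subseteq M$; an antiblock is a pair of edges $\{P_iP_{i+1},P_{i+2}P_{i+3}\}\subseteq M$; a separated pair is a block or an antiblock. *)

theory Defs
  imports Main
begin

text \<open>Points P_1..P_{2k} of X_{2k} are modelled by their indices 0..<2k (index i stands
for P_{i+1}); indices are read modulo n = 2k.  Since the points are in convex position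
and labelled in cyclic order, two straight segments with four distinct endpoints cross
iff their endpoints interleave in the cyclic order.\<close>

definition chord :: "nat \<Rightarrow> nat set \<Rightarrow> bool" where
  "chord n e \<longleftrightarrow> (\<exists>i j. i < n \<and> j < n \<and> i \<noteq> j \<and> e = {i, j})"

definition crossing :: "nat set \<Rightarrow> nat set \<Rightarrow> bool" where
  "crossing e f \<longleftrightarrow> (\<exists>a b c d. e = {a, b} \<and> f = {c, d} \<and> a < c \<and> c < b \<and> b < d)"

definition noncrossing_matching :: "nat \<Rightarrow> nat set set \<Rightarrow> bool" where
  "noncrossing_matching k M \<longleftrightarrow>
     (\<forall>e\<in>M. chord (2*k) e) \<and>
     (\<forall>i<2*k. \<exists>!e. e \<in> M \<and> i \<in> e) \<and>
     (\<forall>e\<in>M. \<forall>f\<in>M. \<not> crossing e f)"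

definition block :: "nat \<Rightarrow> nat \<Rightarrow> nat set set" where
  "block n i = {{i mod n, (i+3) mod n}, {(i+1) mod n, (i+2) mod n}}"

definition antiblock :: "nat \<Rightarrow> nat \<Rightarrow> nat set set" where
  "antiblock n i = {{i mod n, (i+1) mod n}, {(i+2) mod n, (i+3) mod n}}"

definition separated_pair :: "nat \<Rightarrow> nat set set \<Rightarrow> nat set set \<Rightarrow> bool" where
  "separated_pair k M S \<longleftrightarrow> S \<subseteq> M \<and>
     (\<exists>i<2*k. S = block (2*k) i \<or> S = antiblock (2*k) i)"

end

theory Submission
  imports Defs
begin


lemma modA: "(x::nat) = n + y \<Longrightarrow> y < n \<Longrightarrow> x mod n = y"
  by simp

lemma modB: "(x::nat) = y \<Longrightarrow> y < n \<Longrightarrow> x mod n = y"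
  by simp

locale ncm = fixes k :: nat and M :: "nat set set"
  assumes ncm: "noncrossing_matching k M"
begin

definition E where "E i j \<longleftrightarrow> {i,j} \<in> M"

lemma E_sym: "E i j \<Longrightarrow> E j i"
  unfolding E_def by (simp add: insert_commute)

lemma M_chord: "e \<in> M \<Longrightarrow> chord (2*k) e"
  using ncm unfolding noncrossing_matching_def by blast

lemma E_bounds: assumes "E i j" shows "i < 2*k \<and> j < 2*k \<and> i \<noteq> j"
proof -
  from M_chord[of "{i,j}"] assms obtain a b where "a < 2*k" "b < 2*k" "a \<noteq> b" "{i,j} = {a,b}"
    unfolding E_def chord_def by blast
  then show ?thesis by (auto simp: doubleton_eq_iff)
qed

lemma E_unique: assumes "E i j" "E i j'" shows "j = j'"
proof -
  have "i < 2*k" using E_bounds assms by blast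
  then have "\<exists>!e. e \<in> M \<and> i \<in> e" using ncm unfolding noncrossing_matching_def by blast
  then have "{i,j} = {i,j'}" using assms unfolding E_def by blast
  then show ?thesis by (auto simp: doubleton_eq_iff)
qed

lemma E_ex: assumes "i < 2*k" shows "\<exists>j. E i j"
proof -
  obtain e where "e \<in> M" "i \<in> e" using ncm assms unfolding noncrossing_matching_def by blast
  moreover then obtain a b where "e = {a,b}" using M_chord unfolding chord_def by blast
  ultimately show ?thesis unfolding E_def by (auto simp: insert_commute)
qed

lemma E_nc: assumes "E a b" "E c d" "a < c" "c < b" "b < d" shows False
proof -
  have "crossing {a,b} {c,d}" unfolding crossing_def using assms by blast
  then show False using ncm assms unfolding noncrossing_matching_def E_def by blast
qed

definition internal where
  "internal p q \<longleftrightarrow> q < 2*k \<and> (\<forall>x y. p \<le> x \<longrightarrow> x \<le> q \<longrightarrow> E x y \<longrightarrow> p \<le> y \<and> y \<le> q)"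

lemma internal_even: assumes "internal p q" shows "even (card {p..q})"
proof -
  let ?C = "{e \<in> M. e \<subseteq> {p..q}}"
  have U: "\<Union>?C = {p..q}"
  proof
    show "\<Union>?C \<subseteq> {p..q}" by blast
    show "{p..q} \<subseteq> \<Union>?C"
    proof
      fix x assume x: "x \<in> {p..q}"
      then have "x < 2*k" using assms unfolding internal_def by auto
      then obtain y where y: "E x y" using E_ex by blast
      then have "y \<in> {p..q}" using assms x unfolding internal_def by auto
      then show "x \<in> \<Union>?C" using x y unfolding E_def by blast
    qed
  qed
  have "2 dvd card (\<Union>?C)"
  proof (rule dvd_partition)
    show "finite (\<Union>?C)" using U by simp
    show "\<forall>c\<in>?C. 2 dvd card c"
    proof
      fix c assume "c \<in> ?C"
      then obtain a b where "a \<noteq> b" "c = {a,b}" using M_chord unfolding chord_def by blast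
      then show "2 dvd card c" by simp
    qed
    show "\<forall>c1\<in>?C. \<forall>c2\<in>?C. c1 \<noteq> c2 \<longrightarrow> c1 \<inter> c2 = {}"
    proof (intro ballI impI)
      fix c1 c2 assume c: "c1 \<in> ?C" "c2 \<in> ?C" "c1 \<noteq> c2"
      show "c1 \<inter> c2 = {}"
      proof (rule ccontr)
        assume "c1 \<inter> c2 \<noteq> {}"
        then obtain x where x: "x \<in> c1" "x \<in> c2" by blast
        then have "x < 2*k" using c assms unfolding internal_def by auto
        then have "\<exists>!e. e \<in> M \<and> x \<in> e" using ncm unfolding noncrossing_matching_def by blast
        then show False using c x by blast
      qed
    qed
  qed
  then show ?thesis using U by simp
qed

lemma internal_even': assumes "internal p q" "p \<le> q" shows "odd (q - p)"
  using internal_even[OF assms(1)] assms(2) by auto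

lemma internal_inner: assumes "E a b" "a < b" shows "internal (a+1) (b-1)"
  unfolding internal_def
proof (intro conjI allI impI)
  show "b - 1 < 2*k" using E_bounds[OF assms(1)] by auto
  fix x y assume x: "a + 1 \<le> x" "x \<le> b - 1" and y: "E x y"
  have "y \<noteq> a"
  proof
    assume "y = a" then have "E a x" using y E_sym by simp
    then have "x = b" using E_unique assms(1) by blast
    then show False using x assms by simp
  qed
  moreover have "y \<noteq> b"
  proof
    assume "y = b" then have "E b x" using y E_sym by simp
    then have "x = a" using E_unique E_sym assms(1) by blast
    then show False using x assms by simp
  qed
  moreover have "\<not> y < a"
  proof
    assume "y < a"
    moreover have "x < b" using x assms by linarith
    ultimately show False using E_nc[of y x a b] E_sym[OF y] assms x by simp
  qed
  moreover have "\<not> b < y"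
  proof
    assume "b < y"
    moreover have "x < b" using x assms by linarith
    ultimately show False using E_nc[of a b x y] y assms x by simp
  qed
  ultimately show "a + 1 \<le> y" "y \<le> b - 1" by auto
qed

lemma internal_outer: assumes "E a b" "a < b" shows "internal a b"
  unfolding internal_def
proof (intro conjI allI impI)
  show "b < 2*k" using E_bounds[OF assms(1)] by auto
  fix x y assume x: "a \<le> x" "x \<le> b" and y: "E x y"
  have "a \<le> y \<and> y \<le> b"
  proof (cases "x = a \<or> x = b")
    case True
    then show ?thesis
    proof
      assume "x = a" then have "y = b" using E_unique y assms(1) by blast
      then show ?thesis using assms by simp
    next
      assume "x = b" then have "y = a" using E_unique y assms(1) E_sym by blast
      then show ?thesis using assms by simp
    qed
  next
    case False
    then have "a + 1 \<le> x" "x \<le> b - 1" using x by auto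
    then have "a + 1 \<le> y \<and> y \<le> b - 1" using internal_inner[OF assms] y unfolding internal_def by blast
    then show ?thesis by auto
  qed
  then show "a \<le> y" "y \<le> b" by auto
qed

lemma internal_split: assumes "internal p q" "E p c" "p < c" shows "internal (c+1) q"
  unfolding internal_def
proof (intro conjI allI impI)
  show "q < 2*k" using assms unfolding internal_def by auto
  fix x y assume x: "c + 1 \<le> x" "x \<le> q" and y: "E x y"
  have "p \<le> x" using x assms(3) by linarith
  then have "p \<le> y \<and> y \<le> q" using assms(1) x y unfolding internal_def by blast
  moreover have "y \<noteq> p"
  proof
    assume "y = p" then have "E p x" using y E_sym by simp
    then have "x = c" using E_unique assms(2) by blast
    then show False using x by simp
  qed
  moreover have "y \<noteq> c"
  proof
    assume "y = c" then have "E c x" using y E_sym by simp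
    then have "x = p" using E_unique E_sym assms(2) by blast
    then show False using x assms by simp
  qed
  moreover have "\<not> (p < y \<and> y < c)"
  proof
    assume "p < y \<and> y < c" then show False using E_nc[of p c y x] E_sym[OF y] assms x by simp
  qed
  ultimately show "c + 1 \<le> y" "y \<le> q" by auto
qed


lemma M_ne: "e \<in> M \<Longrightarrow> \<exists>x. x \<in> e"
  using M_chord unfolding chord_def by blast

definition inpair where
  "inpair p q S \<longleftrightarrow> separated_pair k M S \<and> (\<forall>e\<in>S. \<forall>x\<in>e. p \<le> x \<and> x \<le> q)"

lemma inpair_mono: "inpair p q S \<Longrightarrow> p' \<le> p \<Longrightarrow> q \<le> q' \<Longrightarrow> inpair p' q' S"
  unfolding inpair_def by (meson order_trans)

lemma inpair_disj: assumes "inpair p1 q1 S" "inpair p2 q2 T" "q1 < p2" shows "S \<inter> T = {}"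
proof (rule ccontr)
  assume "S \<inter> T \<noteq> {}"
  then obtain e where e: "e \<in> S" "e \<in> T" by blast
  then have "e \<in> M" using assms(1) unfolding inpair_def separated_pair_def by blast
  then obtain x where "x \<in> e" using M_ne by blast
  then show False using e assms unfolding inpair_def by force
qed

lemma block_lin: assumes "E p (p+3)" "E (p+1) (p+2)" shows "inpair p (p+3) (block (2*k) p)"
proof -
  have lt: "p + 3 < 2*k" using E_bounds[OF assms(1)] by simp
  have b: "block (2*k) p = {{p,p+3},{p+1,p+2}}" unfolding block_def using lt by simp
  have sub: "block (2*k) p \<subseteq> M" using assms unfolding b E_def by simp
  have "p < 2*k" using lt by simp
  then have sp: "separated_pair k M (block (2*k) p)" unfolding separated_pair_def using sub by blast
  have "\<forall>e\<in>block (2*k) p. \<forall>x\<in>e. p \<le> x \<and> x \<le> p + 3" unfolding b by auto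
  then show ?thesis unfolding inpair_def using sp by blast
qed

lemma anti_lin: assumes "E p (p+1)" "E (p+2) (p+3)" shows "inpair p (p+3) (antiblock (2*k) p)"
proof -
  have lt: "p + 3 < 2*k" using E_bounds[OF assms(2)] by simp
  have b: "antiblock (2*k) p = {{p,p+1},{p+2,p+3}}" unfolding antiblock_def using lt by simp
  have sub: "antiblock (2*k) p \<subseteq> M" using assms unfolding b E_def by simp
  have "p < 2*k" using lt by simp
  then have sp: "separated_pair k M (antiblock (2*k) p)" unfolding separated_pair_def using sub by blast
  have "\<forall>e\<in>antiblock (2*k) p. \<forall>x\<in>e. p \<le> x \<and> x \<le> p + 3" unfolding b by auto
  then show ?thesis unfolding inpair_def using sp by blast
qed

lemma partner_in: assumes "internal p q" "p \<le> x" "x \<le> q"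
  obtains y where "E x y" "p \<le> y" "y \<le> q" "y \<noteq> x"
proof -
  have q: "q < 2*k" and H: "\<forall>x y. p \<le> x \<longrightarrow> x \<le> q \<longrightarrow> E x y \<longrightarrow> p \<le> y \<and> y \<le> q"
    using assms(1) unfolding internal_def by blast+
  have "x < 2*k" using q assms(3) by linarith
  then obtain y where y: "E x y" using E_ex by blast
  have "p \<le> y \<and> y \<le> q" using H assms(2,3) y by blast
  moreover have "y \<noteq> x" using E_bounds[OF y] by simp
  ultimately show ?thesis using that y by blast
qed

lemma odd_gap: assumes "E p c" "p < c" shows "odd (c - p)"
proof -
  have "even (card {p+1..c-1})" using internal_even[OF internal_inner[OF assms]] .
  moreover have "card {p+1..c-1} = c - p - 1" using assms by simp
  ultimately show ?thesis using assms by presburger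
qed

lemma linear: "internal p q \<Longrightarrow> p + 3 \<le> q \<Longrightarrow> \<exists>S. inpair p q S"
proof (induction "q - p" arbitrary: p q rule: less_induct)
  case less
  note I = less(2)
  obtain c where c: "E p c" "p \<le> c" "c \<le> q" "c \<noteq> p" using partner_in[OF I, of p] less(3) by auto
  have pc: "p < c" using c by simp
  have oc: "odd (c - p)" using odd_gap[OF c(1) pc] .
  have oq: "odd (q - p)" using internal_even'[OF I] less(3) by simp
  show ?case
  proof (cases "c = q")
    case True
    have inner: "internal (p+1) (q-1)" using internal_inner[OF c(1) pc] True by simp
    show ?thesis
    proof (cases "q = p + 3")
      case True
      obtain y where y: "E (p+1) y" "p+1 \<le> y" "y \<le> q - 1" "y \<noteq> p+1"
        using partner_in[OF inner, of "p+1"] True by auto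
      then have "y = p + 2" using True by simp
      then have "inpair p (p+3) (block (2*k) p)" using block_lin c(1) y True \<open>c = q\<close> by simp
      then show ?thesis using True by blast
    next
      case False
      then have "p + 1 + 3 \<le> q - 1" using oq less(3) by presburger
      then obtain S where "inpair (p+1) (q-1) S" using less(1)[OF _ inner] by force
      then have "inpair p q S" by (rule inpair_mono) auto
      then show ?thesis by blast
    qed
  next
    case False
    then have cq: "c < q" using c by simp
    have R: "internal (c+1) q" using internal_split[OF I c(1) pc] .
    show ?thesis
    proof (cases "p + 3 \<le> c")
      case True
      have "c - p < q - p" using cq pc by simp
      then obtain S where "inpair p c S" using less(1)[OF _ internal_outer[OF c(1) pc] True] by blast
      then have "inpair p q S" by (rule inpair_mono) (use cq in auto)
      then show ?thesis by blast
    next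
      case False
      then have c1: "c = p + 1" using oc pc by presburger
      show ?thesis
      proof (cases "c + 1 + 3 \<le> q")
        case True
        have "q - (c + 1) < q - p" using pc cq by simp
        then obtain S where "inpair (c+1) q S" using less(1)[OF _ R True] by blast
        then have "inpair p q S" by (rule inpair_mono) (use pc in auto)
        then show ?thesis by blast
      next
        case False
        then have q3: "q = p + 3" using oq less(3) c1 by presburger
        obtain y where y: "E (p+2) y" "p+2 \<le> y" "y \<le> q" "y \<noteq> p+2"
          using partner_in[OF R, of "p+2"] c1 q3 by auto
        then have "y = p + 3" using q3 by simp
        then have "inpair p (p+3) (antiblock (2*k) p)" using anti_lin c(1) c1 y by simp
        then show ?thesis using q3 by blast
      qed
    qed
  qed
qed

lemma G: assumes I: "internal p q" and len: "p + 5 \<le> q" and uv: "E u v" "u < p \<or> q < u"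
  and hb: "\<exists>i<2*k. block (2*k) i = {{p,q},{u,v}}"
  and ha1: "\<exists>i<2*k. antiblock (2*k) i = {{u,v},{p,p+1}}"
  and ha2: "\<exists>i<2*k. antiblock (2*k) i = {{q-1,q},{u,v}}"
  shows "\<exists>S T. separated_pair k M S \<and> separated_pair k M T \<and> S \<inter> T = {}"
proof -
  obtain c where c: "E p c" "p \<le> c" "c \<le> q" "c \<noteq> p" using partner_in[OF I, of p] len by auto
  have pc: "p < c" using c by simp
  have oc: "odd (c - p)" using odd_gap[OF c(1) pc] .
  have oq: "odd (q - p)" using internal_even'[OF I] len by simp
  have uvM: "{u,v} \<in> M" using uv unfolding E_def by simp
  have "c = q \<or> c = p + 1 \<or> (p + 3 \<le> c \<and> c < q)" using oc pc c by presburger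
  then consider "c = q" | "c = p + 1" | "p + 3 \<le> c" "c < q" by blast
  then show ?thesis
  proof cases
    case 1
    let ?S = "{{p,q},{u,v}}"
    have S: "separated_pair k M ?S" using hb uvM c(1) 1 unfolding separated_pair_def E_def by auto
    have inner: "internal (p+1) (q-1)" using internal_inner[OF c(1) pc] 1 by simp
    obtain T where T: "inpair (p+1) (q-1) T" using linear[OF inner] len by force
    have "?S \<inter> T = {}"
    proof (rule ccontr)
      assume "?S \<inter> T \<noteq> {}"
      then have "{p,q} \<in> T \<or> {u,v} \<in> T" by blast
      then show False using T uv(2) unfolding inpair_def by force
    qed
    then show ?thesis using S T unfolding inpair_def by blast
  next
    case 2
    let ?S = "{{u,v},{p,p+1}}"
    have S: "separated_pair k M ?S" using ha1 uvM c(1) 2 unfolding separated_pair_def E_def by auto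
    have R: "internal (p+2) q" using internal_split[OF I c(1) pc] 2 by simp
    obtain T where T: "inpair (p+2) q T" using linear[OF R] len by force
    have "?S \<inter> T = {}"
    proof (rule ccontr)
      assume "?S \<inter> T \<noteq> {}"
      then have "{p,p+1} \<in> T \<or> {u,v} \<in> T" by blast
      then show False using T uv(2) unfolding inpair_def by force
    qed
    then show ?thesis using S T unfolding inpair_def by blast
  next
    case 3
    obtain S where S: "inpair p c S" using linear[OF internal_outer[OF c(1) pc]] 3 by force
    have R: "internal (c+1) q" using internal_split[OF I c(1) pc] .
    have oR: "odd (q - (c+1))" using internal_even'[OF R] 3 by simp
    show ?thesis
    proof (cases "c + 1 + 3 \<le> q")
      case True
      obtain T where T: "inpair (c+1) q T" using linear[OF R True] by force
      have "S \<inter> T = {}" using inpair_disj[OF S T] by simp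
      then show ?thesis using S T unfolding inpair_def by blast
    next
      case False
      then have q2: "q = c + 2" using oR 3 by presburger
      obtain y where y: "E (q-1) y" "c+1 \<le> y" "y \<le> q" "y \<noteq> q-1"
        using partner_in[OF R, of "q-1"] q2 by auto
      then have yq: "y = q" using q2 by simp
      let ?T = "{{q-1,q},{u,v}}"
      have T: "separated_pair k M ?T" using ha2 uvM y yq unfolding separated_pair_def E_def by auto
      have "S \<inter> ?T = {}"
      proof (rule ccontr)
        assume "S \<inter> ?T \<noteq> {}"
        then have "{q-1,q} \<in> S \<or> {u,v} \<in> S" by blast
        then show False using S uv(2) q2 3 unfolding inpair_def by force
      qed
      then show ?thesis using S T unfolding inpair_def by blast
    qed
  qed
qed

end

theorem mainTheorem6:
  fixes k :: nat and M :: "nat set set"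
  assumes "k \<ge> 4" and "noncrossing_matching k M"
  shows "\<exists>S T. separated_pair k M S \<and> separated_pair k M T \<and> S \<inter> T = {}"
proof -
  interpret ncm k M using assms(2) by unfold_locales
  have k4: "k \<ge> 4" using assms(1) .
  have I0: "internal 0 (2*k-1)" unfolding internal_def
  proof (intro conjI allI impI)
    show "2*k-1 < 2*k" using k4 by simp
    fix x y assume "E x y"
    then have "y < 2*k" using E_bounds by blast
    then show "0 \<le> y" "y \<le> 2*k-1" by simp_all
  qed
  show ?thesis
  proof (cases "E 0 (2*k-1)")
    case True
    have e: "2*k-1-1 = 2*k-2" by simp
    have "internal (0+1) (2*k-1-1)" using internal_inner[OF True] k4 by (simp only:)
    then have I: "internal 1 (2*k-2)" by (simp only: e add_0)
    show ?thesis
    proof (rule G[OF I _ E_sym[OF True]])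
      show "1 + 5 \<le> 2*k-2" using k4 by simp
      show "2*k-1 < 1 \<or> 2*k-2 < 2*k-1" using k4 by simp
      have b_m0: "(2*k-2) mod (2*k) = 2*k-2" by (rule modB) (use k4 in arith)+
      have b_m1: "(2*k-2+1) mod (2*k) = 2*k-1" by (rule modB) (use k4 in arith)+
      have b_m2: "(2*k-2+2) mod (2*k) = 0" by (rule modA) (use k4 in arith)+
      have b_m3: "(2*k-2+3) mod (2*k) = 1" by (rule modA) (use k4 in arith)+
      have "block (2*k) (2*k-2) = {{1,2*k-2},{2*k-1,0}}"
        unfolding block_def b_m0 b_m1 b_m2 b_m3 by (auto simp: insert_commute)
      then show "\<exists>i<2*k. block (2*k) i = {{1,2*k-2},{2*k-1,0}}" using k4
        by (intro exI[of _ "2*k-2"]) simp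
      have a_m0: "(2*k-1) mod (2*k) = 2*k-1" by (rule modB) (use k4 in arith)+
      have a_m1: "(2*k-1+1) mod (2*k) = 0" by (rule modA) (use k4 in arith)+
      have a_m2: "(2*k-1+2) mod (2*k) = 1" by (rule modA) (use k4 in arith)+
      have a_m3: "(2*k-1+3) mod (2*k) = 2" by (rule modA) (use k4 in arith)+
      have "antiblock (2*k) (2*k-1) = {{2*k-1,0},{1,1+1}}"
        unfolding antiblock_def a_m0 a_m1 a_m2 a_m3 by (auto simp: insert_commute)
      then show "\<exists>i<2*k. antiblock (2*k) i = {{2*k-1,0},{1,1+1}}" using k4
        by (intro exI[of _ "2*k-1"]) simp
      have a_m0: "(2*k-3) mod (2*k) = 2*k-3" by (rule modB) (use k4 in arith)+
      have a_m1: "(2*k-3+1) mod (2*k) = 2*k-2" by (rule modB) (use k4 in arith)+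
      have a_m2: "(2*k-3+2) mod (2*k) = 2*k-1" by (rule modB) (use k4 in arith)+
      have a_m3: "(2*k-3+3) mod (2*k) = 0" by (rule modA) (use k4 in arith)+
      have "antiblock (2*k) (2*k-3) = {{2*k-2-1,2*k-2},{2*k-1,0}}"
        unfolding antiblock_def a_m0 a_m1 a_m2 a_m3 by (auto simp: insert_commute)
      then show "\<exists>i<2*k. antiblock (2*k) i = {{2*k-2-1,2*k-2},{2*k-1,0}}" using k4
        by (intro exI[of _ "2*k-3"]) simp
    qed
  next
    case False
    obtain b where b: "E 0 b" "0 \<le> b" "b \<le> 2*k-1" "b \<noteq> 0" using partner_in[OF I0, of 0] by auto
    have b1: "b \<noteq> 2*k-1" using False b by auto
    have pb: "0 < b" using b by simp
    have ob: "odd b" using odd_gap[OF b(1) pb] by simp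
    have IL: "internal 0 b" using internal_outer[OF b(1) pb] .
    have IR: "internal (b+1) (2*k-1)" using internal_split[OF I0 b(1) pb] .
    have "b = 1 \<or> b = 2*k-3 \<or> (3 \<le> b \<and> b \<le> 2*k-5)"
      using ob b(3,4) b1 k4 by presburger
    then consider "b = 1" | "b = 2*k-3" | "3 \<le> b" "b \<le> 2*k-5" by blast
    then show ?thesis
    proof cases
      case 1
      have I: "internal 2 (2*k-1)" using IR 1 by (simp add: numeral_2_eq_2)
      have E01: "E 0 1" using b 1 by simp
      show ?thesis
      proof (rule G[OF I _ E01])
        show "2 + 5 \<le> 2*k-1" using k4 by simp
        show "(0::nat) < 2 \<or> 2*k-1 < 0" by simp
        have b_m0: "(2*k-1) mod (2*k) = 2*k-1" by (rule modB) (use k4 in arith)+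
        have b_m1: "(2*k-1+1) mod (2*k) = 0" by (rule modA) (use k4 in arith)+
        have b_m2: "(2*k-1+2) mod (2*k) = 1" by (rule modA) (use k4 in arith)+
        have b_m3: "(2*k-1+3) mod (2*k) = 2" by (rule modA) (use k4 in arith)+
        have "block (2*k) (2*k-1) = {{2,2*k-1},{0,1}}"
          unfolding block_def b_m0 b_m1 b_m2 b_m3 by (auto simp: insert_commute)
        then show "\<exists>i<2*k. block (2*k) i = {{2,2*k-1},{0,1}}" using k4
          by (intro exI[of _ "2*k-1"]) simp
        have "antiblock (2*k) 0 = {{0,1},{2,2+1}}"
          unfolding antiblock_def using k4 by (simp add: numeral_eq_Suc)
        then show "\<exists>i<2*k. antiblock (2*k) i = {{0,1},{2,2+1}}" using k4
          by (intro exI[of _ 0]) simp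
        have a_m0: "(2*k-2) mod (2*k) = 2*k-2" by (rule modB) (use k4 in arith)+
        have a_m1: "(2*k-2+1) mod (2*k) = 2*k-1" by (rule modB) (use k4 in arith)+
        have a_m2: "(2*k-2+2) mod (2*k) = 0" by (rule modA) (use k4 in arith)+
        have a_m3: "(2*k-2+3) mod (2*k) = 1" by (rule modA) (use k4 in arith)+
        have "antiblock (2*k) (2*k-2) = {{2*k-1-1,2*k-1},{0,1}}"
          unfolding antiblock_def a_m0 a_m1 a_m2 a_m3 by (auto simp: insert_commute)
        then show "\<exists>i<2*k. antiblock (2*k) i = {{2*k-1-1,2*k-1},{0,1}}" using k4
          by (intro exI[of _ "2*k-2"]) simp
      qed
    next
      case 2
      have I: "internal 0 (2*k-3)" using IL 2 by simp
      have e2: "b + 1 = 2*k-2" using 2 k4 by simp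
      have IR2: "internal (2*k-2) (2*k-1)" using IR unfolding e2 .
      obtain y where y: "E (2*k-2) y" "2*k-2 \<le> y" "y \<le> 2*k-1" "y \<noteq> 2*k-2"
      proof -
        have "2*k-2 \<le> 2*k-1" by simp
        then show ?thesis using partner_in[OF IR2 le_refl] that by blast
      qed
      have "y = 2*k-1" using y(2,3,4) by arith
      then have Euv: "E (2*k-2) (2*k-1)" using y(1) by simp
      show ?thesis
      proof (rule G[OF I _ Euv])
        show "0 + 5 \<le> 2*k-3" using k4 by simp
        show "2*k-2 < 0 \<or> 2*k-3 < 2*k-2" using k4 by simp
        have b_m0: "(2*k-3) mod (2*k) = 2*k-3" by (rule modB) (use k4 in arith)+
        have b_m1: "(2*k-3+1) mod (2*k) = 2*k-2" by (rule modB) (use k4 in arith)+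
        have b_m2: "(2*k-3+2) mod (2*k) = 2*k-1" by (rule modB) (use k4 in arith)+
        have b_m3: "(2*k-3+3) mod (2*k) = 0" by (rule modA) (use k4 in arith)+
        have "block (2*k) (2*k-3) = {{0,2*k-3},{2*k-2,2*k-1}}"
          unfolding block_def b_m0 b_m1 b_m2 b_m3 by (auto simp: insert_commute)
        then show "\<exists>i<2*k. block (2*k) i = {{0,2*k-3},{2*k-2,2*k-1}}" using k4
          by (intro exI[of _ "2*k-3"]) simp
        have a_m0: "(2*k-2) mod (2*k) = 2*k-2" by (rule modB) (use k4 in arith)+
        have a_m1: "(2*k-2+1) mod (2*k) = 2*k-1" by (rule modB) (use k4 in arith)+
        have a_m2: "(2*k-2+2) mod (2*k) = 0" by (rule modA) (use k4 in arith)+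
        have a_m3: "(2*k-2+3) mod (2*k) = 1" by (rule modA) (use k4 in arith)+
        have "antiblock (2*k) (2*k-2) = {{2*k-2,2*k-1},{0,0+1}}"
          unfolding antiblock_def a_m0 a_m1 a_m2 a_m3 by (auto simp: insert_commute)
        then show "\<exists>i<2*k. antiblock (2*k) i = {{2*k-2,2*k-1},{0,0+1}}" using k4
          by (intro exI[of _ "2*k-2"]) simp
        have a_m0: "(2*k-4) mod (2*k) = 2*k-4" by (rule modB) (use k4 in arith)+
        have a_m1: "(2*k-4+1) mod (2*k) = 2*k-3" by (rule modB) (use k4 in arith)+
        have a_m2: "(2*k-4+2) mod (2*k) = 2*k-2" by (rule modB) (use k4 in arith)+
        have a_m3: "(2*k-4+3) mod (2*k) = 2*k-1" by (rule modB) (use k4 in arith)+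
        have "antiblock (2*k) (2*k-4) = {{2*k-3-1,2*k-3},{2*k-2,2*k-1}}"
          unfolding antiblock_def a_m0 a_m1 a_m2 a_m3 by (auto simp: insert_commute)
        then show "\<exists>i<2*k. antiblock (2*k) i = {{2*k-3-1,2*k-3},{2*k-2,2*k-1}}" using k4
          by (intro exI[of _ "2*k-4"]) simp
      qed
    next
      case 3
      obtain S where S: "inpair 0 b S" using linear[OF IL] 3 by force
      obtain T where T: "inpair (b+1) (2*k-1) T" using linear[OF IR] 3 by force
      have "S \<inter> T = {}" using inpair_disj[OF S T] by simp
      then show ?thesis using S T unfolding inpair_def by blast
    qed
  qed
qed

end
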